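(* Let $\sigma \in (\mathbb{R}[\mathbf{x}]_{2d+2})^{*}$ be a positive linear functional, and let $\mathbf{k}, \mathbf{p}$ (together with $\mathbf{l}$, $\mathbf{b}$) be the output of the orthogonalization algorithm described below. For $\mathbf{x}^{\alpha}\in (\mathbf{l})_{d}$, i.e. $\mathbf{x}^{\alpha}$ divisible by a monomial in $\mathbf{l}$ and of degree $|\alpha|\le d$, the polynomial $p_{\alpha}= \mathrm{proj}(\mathbf{x}^{\alpha}, \mathbf{p}_{\preceq \alpha})$ lies in $(\mathbf{k})_{\preceq \alpha} \subset \mathrm{Ann}_{d}(\sigma)$.
   Context: Let $\sigma \in (\mathbb{R}[\mathbf{x}]_{2d+2})^{*}$ be positive, i.e. $\sigma(p^2)\ge 0$ for all polynomials $p$ of degree $\le d+1$. Define the bilinear form $\langle p, q\rangle_{\sigma} := \sigma(pq)$ on $\mathbb{R}[\mathbf{x}]_d$, and $\mathrm{Ann}_{d}(\sigma)=\{p\in \mathbb{R}[\mathbf{x}]_{d} \mid \sigma(pq)=0 \text{ for all } q\in\mathbb{R}[\mathbf{x}]_d\} = \{p \in \mathbb{R}[\mathbf{x}]_{d}\mid \sigma(p^{2})=0\}$. For a list $\mathbf{p}=[p_1,\dots,p_l]$ of polynomials with $\langle p_i,p_i\rangle_\sigma>0$ and $\langle p_i,p_j\rangle_\sigma=0$ for $i\ne j$, set $\mathrm{proj}(f,\mathbf{p}) = f - \sum_{i=1}^{l} \frac{\langle f,p_i\rangle_\sigma}{\langle p_i,p_i\rangle_\sigma} p_i$. The algorithm: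 fix a monomial ordering $\prec$ compatible with degree. Start with empty lists $\mathbf{b},\mathbf{p},\mathbf{k},\mathbf{l}$ and current monomial set $\mathbf{n}=[1]$. While $\mathbf{n}$ is nonempty, for each $\mathbf{x}^\alpha\in\mathbf{n}$ compute $p_\alpha := \mathrm{proj}(\mathbf{x}^\alpha,\mathbf{p})$ and $v_\alpha=\langle p_\alpha,p_\alpha\rangle_\sigma$; if $v_\alpha\neq 0$, add $\mathbf{x}^\alpha$ to $\mathbf{b}$ and $p_\alpha$ to $\mathbf{p}$, otherwise add $k_\alpha:=p_\alpha$ to $\mathbf{k}$ and $\mathbf{x}^\alpha$ to $\mathbf{l}$. Then let $\mathbf{n}$ be the monomials of degree $\le d$ of lowest degree, ordered by $\prec$, not in $\mathbf{b}$ and not divisible by a monomial of $\mathbf{l}$. The output is $\mathbf{k}=[k_\gamma]_{\mathbf{x}^\gamma\in\mathbf{l}}$ (with leading monomials $\mathbf{l}$), orthogonal polynomials $\mathbf{p}=[p_\beta]$, and monomials $\mathbf{b}$. Notation: for $\alpha\in\mathbb{N}^n$, $(\mathbf{k})_{\preceq\alpha}$ is the vector space spanned by the polynomials $\mathbf{x}^\delta k_\gamma$ with $\delta+\gamma\preceq\alpha$; $\mathbf{p}_{\preceq\alpha}$ is the set of $p_\beta\in\mathbf{p}$ with $\beta\preceq\alpha$. *)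

theory Defs
  imports Complex_Main "HOL-Library.Poly_Mapping"
begin

text \<open>Multivariate real polynomials in the variables of a finite type 'v:
  monomials x^alpha are exponent vectors 'v =>0 nat, polynomials are finitely
  supported maps from monomials to real coefficients (with convolution product).\<close>

type_synonym 'v mon = "'v \<Rightarrow>\<^sub>0 nat"
type_synonym 'v mpoly = "'v mon \<Rightarrow>\<^sub>0 real"

definition mdeg :: "'v mon \<Rightarrow> nat" where
  "mdeg a = (\<Sum>v\<in>Poly_Mapping.keys a. Poly_Mapping.lookup a v)"

definition monom :: "'v mon \<Rightarrow> 'v mpoly" where
  "monom a = Poly_Mapping.single a 1"

definition cpoly :: "real \<Rightarrow> 'v mpoly" where
  "cpoly c = Poly_Mapping.single 0 c"

definition mdvd :: "'v mon \<Rightarrow> 'v mon \<Rightarrow> bool" where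
  "mdvd g a \<longleftrightarrow> (\<forall>v. Poly_Mapping.lookup g v \<le> Poly_Mapping.lookup a v)"

definition deg_le :: "nat \<Rightarrow> 'v mpoly \<Rightarrow> bool" where
  "deg_le d p \<longleftrightarrow> (\<forall>a\<in>Poly_Mapping.keys p. mdeg a \<le> d)"

definition monomial_order :: "('v mon \<Rightarrow> 'v mon \<Rightarrow> bool) \<Rightarrow> bool" where
  "monomial_order le \<longleftrightarrow>
     (\<forall>a. le a a) \<and> (\<forall>a b. le a b \<and> le b a \<longrightarrow> a = b) \<and>
     (\<forall>a b c. le a b \<and> le b c \<longrightarrow> le a c) \<and> (\<forall>a b. le a b \<or> le b a) \<and>
     (\<forall>a. le 0 a) \<and> (\<forall>a b c. le a b \<longrightarrow> le (a + c) (b + c))"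

definition degree_compatible :: "('v mon \<Rightarrow> 'v mon \<Rightarrow> bool) \<Rightarrow> bool" where
  "degree_compatible le \<longleftrightarrow> (\<forall>a b. mdeg a < mdeg b \<longrightarrow> le a b \<and> a \<noteq> b)"

text \<open>A linear functional on polynomials, given by its moments s(alpha) = sigma(x^alpha).\<close>
definition sigma :: "('v mon \<Rightarrow> real) \<Rightarrow> 'v mpoly \<Rightarrow> real" where
  "sigma s f = (\<Sum>a\<in>Poly_Mapping.keys f. Poly_Mapping.lookup f a * s a)"

definition ip :: "('v mon \<Rightarrow> real) \<Rightarrow> 'v mpoly \<Rightarrow> 'v mpoly \<Rightarrow> real" where
  "ip s p q = sigma s (p * q)"

text \<open>sigma in (R[x]_{2d+2})^* is positive: sigma(p^2) >= 0 for deg p <= d+1.\<close>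
definition positive_functional :: "nat \<Rightarrow> ('v mon \<Rightarrow> real) \<Rightarrow> bool" where
  "positive_functional d s \<longleftrightarrow> (\<forall>p. deg_le (d + 1) p \<longrightarrow> sigma s (p * p) \<ge> 0)"

definition proj :: "('v mon \<Rightarrow> real) \<Rightarrow> 'v mpoly \<Rightarrow> 'v mpoly list \<Rightarrow> 'v mpoly" where
  "proj s f ps = f - sum_list (map (\<lambda>q. cpoly (ip s f q / ip s q q) * q) ps)"

definition Ann :: "('v mon \<Rightarrow> real) \<Rightarrow> nat \<Rightarrow> 'v mpoly set" where
  "Ann s d = {p. deg_le d p \<and> (\<forall>q. deg_le d q \<longrightarrow> sigma s (p * q) = 0)}"

definition lin_span :: "'v mpoly set \<Rightarrow> 'v mpoly set" where
  "lin_span S = {p. \<exists>F c. finite F \<and> F \<subseteq> S \<and> p = (\<Sum>q\<in>F. cpoly (c q) * q)}"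

text \<open>Algorithm state: (b, p, l, k) with p parallel to b and k parallel to l.\<close>
type_synonym 'v state = "'v mon list \<times> 'v mpoly list \<times> 'v mon list \<times> 'v mpoly list"

definition proc_mon :: "('v mon \<Rightarrow> real) \<Rightarrow> 'v mon \<Rightarrow> 'v state \<Rightarrow> 'v state" where
  "proc_mon s a st = (case st of (b, ps, l, ks) \<Rightarrow>
     (let pa = proj s (monom a) ps in
      if ip s pa pa \<noteq> 0 then (b @ [a], ps @ [pa], l, ks) else (b, ps, l @ [a], ks @ [pa])))"

definition candidates :: "nat \<Rightarrow> 'v mon list \<Rightarrow> 'v mon list \<Rightarrow> 'v mon set" where
  "candidates d b l = {a. mdeg a \<le> d \<and> a \<notin> set b \<and> \<not> (\<exists>g\<in>set l. mdvd g a)}"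

definition lowest :: "'v mon set \<Rightarrow> 'v mon set" where
  "lowest S = {a\<in>S. \<forall>c\<in>S. mdeg a \<le> mdeg c}"

definition sort_by :: "('v mon \<Rightarrow> 'v mon \<Rightarrow> bool) \<Rightarrow> 'v mon set \<Rightarrow> 'v mon list" where
  "sort_by le S = (THE xs. distinct xs \<and> set xs = S \<and> sorted_wrt le xs)"

definition next_n :: "('v mon \<Rightarrow> 'v mon \<Rightarrow> bool) \<Rightarrow> nat \<Rightarrow> 'v state \<Rightarrow> 'v mon list" where
  "next_n le d st = (case st of (b, ps, l, ks) \<Rightarrow> sort_by le (lowest (candidates d b l)))"

text \<open>State and current monomial list n after N rounds of the while loop
  (once n is empty, the loop has stopped and nothing changes).\<close>
fun alg_iter :: "('v mon \<Rightarrow> 'v mon \<Rightarrow> bool) \<Rightarrow> ('v mon \<Rightarrow> real) \<Rightarrow> nat \<Rightarrow> nat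
    \<Rightarrow> 'v state \<times> 'v mon list" where
  "alg_iter le s d 0 = (([], [], [], []), [0])"
| "alg_iter le s d (Suc N) =
    (case alg_iter le s d N of (st, n) \<Rightarrow>
       if n = [] then (st, n)
       else (let st' = fold (proc_mon s) n st in (st', next_n le d st')))"

definition alg_output :: "('v mon \<Rightarrow> 'v mon \<Rightarrow> bool) \<Rightarrow> ('v mon \<Rightarrow> real) \<Rightarrow> nat \<Rightarrow> 'v state \<Rightarrow> bool" where
  "alg_output le s d st \<longleftrightarrow> (\<exists>N. alg_iter le s d N = (st, []))"

definition p_upto :: "('v mon \<Rightarrow> 'v mon \<Rightarrow> bool) \<Rightarrow> 'v mon \<Rightarrow> 'v mon list \<Rightarrow> 'v mpoly list \<Rightarrow> 'v mpoly list" where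
  "p_upto le a b ps = map snd (filter (\<lambda>(be, _). le be a) (zip b ps))"

definition k_upto :: "('v mon \<Rightarrow> 'v mon \<Rightarrow> bool) \<Rightarrow> 'v mon \<Rightarrow> 'v mon list \<Rightarrow> 'v mpoly list \<Rightarrow> 'v mpoly set" where
  "k_upto le a l ks = lin_span {monom de * kg | de g kg. (g, kg) \<in> set (zip l ks) \<and> le (de + g) a}"

end

theory Submission
  imports Defs
begin

lemma cpoly_add: "cpoly (a+b) = cpoly a + cpoly b" by (simp add: cpoly_def single_add)
lemma cpoly_mult: "cpoly (a*b) = cpoly a * cpoly b" by (simp add: cpoly_def mult_single)
lemma cpoly_one[simp]: "cpoly 1 = 1" by (simp add: cpoly_def)
lemma cpoly_zero[simp]: "cpoly 0 = 0" by (simp add: cpoly_def)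

interpretation pm: module "\<lambda>c (p::'v mpoly). cpoly c * p"
  by standard (simp_all add: algebra_simps cpoly_add cpoly_mult)

lemma lin_span_eq: "lin_span S = pm.span S"
  unfolding lin_span_def pm.span_explicit by blast

lemma lookup_cpoly_mult: "Poly_Mapping.lookup (cpoly c * p) a = c * Poly_Mapping.lookup p a"
  unfolding cpoly_def mult_map_scale_conv_mult[symmetric]
  by (simp add: map.rep_eq when_def)

lemma keys_cpoly_mult: "Poly_Mapping.keys (cpoly c * p) \<subseteq> Poly_Mapping.keys p"
  by (auto simp: in_keys_iff lookup_cpoly_mult)

lemma sigma_superset:
  assumes "finite A" "Poly_Mapping.keys f \<subseteq> A"
  shows "sigma s f = (\<Sum>a\<in>A. Poly_Mapping.lookup f a * s a)"
  unfolding sigma_def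
  by (rule sum.mono_neutral_left) (use assms in \<open>auto simp: in_keys_iff\<close>)

lemma sigma_add: "sigma s (f + g) = sigma s f + sigma s g"
proof -
  let ?A = "Poly_Mapping.keys f \<union> Poly_Mapping.keys g \<union> Poly_Mapping.keys (f+g)"
  have "sigma s (f+g) = (\<Sum>a\<in>?A. Poly_Mapping.lookup (f+g) a * s a)"
    by (rule sigma_superset) auto
  also have "\<dots> = (\<Sum>a\<in>?A. Poly_Mapping.lookup f a * s a) + (\<Sum>a\<in>?A. Poly_Mapping.lookup g a * s a)"
    by (simp add: lookup_add algebra_simps sum.distrib)
  also have "\<dots> = sigma s f + sigma s g"
    by (subst (1 2) sigma_superset[of ?A]) auto
  finally show ?thesis .
qed

lemma sigma_scale: "sigma s (cpoly c * f) = c * sigma s f"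
proof -
  have "sigma s (cpoly c * f) = (\<Sum>a\<in>Poly_Mapping.keys f. Poly_Mapping.lookup (cpoly c * f) a * s a)"
    by (rule sigma_superset) (auto simp: keys_cpoly_mult[THEN subsetD])
  then show ?thesis by (simp only: sigma_def lookup_cpoly_mult sum_distrib_left mult.assoc)
qed

lemma sigma_zero[simp]: "sigma s 0 = 0" by (simp add: sigma_def)

lemma sigma_uminus: "sigma s (- f) = - sigma s f"
proof -
  have "cpoly (-1) * f = - f" by (simp add: cpoly_def single_uminus)
  then show ?thesis using sigma_scale[of s "-1" f] by simp
qed

lemma sigma_diff: "sigma s (f - g) = sigma s f - sigma s g"
  using sigma_add[of s f "-g"] sigma_uminus[of s g] by simp

lemma sigma_sum: "sigma s (sum f A) = (\<Sum>x\<in>A. sigma s (f x))"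
  by (induct A rule: infinite_finite_induct) (auto simp: sigma_add)

lemma ip_zero[simp]: "ip s 0 r = 0" by (simp add: ip_def)
lemma ip_sym: "ip s p q = ip s q p" by (simp add: ip_def mult.commute)
lemma ip_add: "ip s (p + q) r = ip s p r + ip s q r" by (simp add: ip_def distrib_right sigma_add)
lemma ip_diff: "ip s (p - q) r = ip s p r - ip s q r" by (simp add: ip_def left_diff_distrib sigma_diff)
lemma ip_scale: "ip s (cpoly c * p) r = c * ip s p r" by (simp add: ip_def mult.assoc sigma_scale)
lemma ip_sum: "ip s (sum f A) r = (\<Sum>x\<in>A. ip s (f x) r)"
  by (simp add: ip_def sum_distrib_right sigma_sum)

lemma ip_span_zero:
  assumes "p \<in> pm.span S" "\<And>x. x \<in> S \<Longrightarrow> ip s x r = 0"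
  shows "ip s p r = 0"
proof -
  have "pm.subspace {p. ip s p r = 0}"
    by (rule pm.subspaceI) (auto simp: ip_add ip_scale)
  then have "pm.span S \<subseteq> {p. ip s p r = 0}"
    using assms(2) by (intro pm.span_minimal) auto
  then show ?thesis using assms(1) by auto
qed


lemma ip_sym_scale: "ip s p (cpoly c * q) = c * ip s p q"
  by (metis ip_sym ip_scale)

lemma mdeg_sum: "mdeg (a::'v::finite mon) = (\<Sum>v\<in>UNIV. Poly_Mapping.lookup a v)"
  unfolding mdeg_def by (rule sum.mono_neutral_left) (auto simp: in_keys_iff)

lemma mdeg_add: "mdeg ((a::'v::finite mon) + b) = mdeg a + mdeg b"
  by (simp add: mdeg_sum lookup_add sum.distrib)

lemma mdeg_zero[simp]: "mdeg 0 = 0" by (simp add: mdeg_def)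

lemma lookup_le_mdeg: "Poly_Mapping.lookup (a::'v::finite mon) v \<le> mdeg a"
  unfolding mdeg_sum by (rule member_le_sum) auto

lemma mdeg_eq_0: "mdeg (a::'v::finite mon) = 0 \<Longrightarrow> a = 0"
  by (rule poly_mapping_eqI) (metis le_zero_eq lookup_le_mdeg lookup_zero)

lemma deg_le_subspace: "pm.subspace {p. deg_le t p}"
  by (rule pm.subspaceI) (auto simp: deg_le_def dest: keys_add[THEN subsetD] keys_cpoly_mult[THEN subsetD])

lemma deg_le_add: "deg_le t p \<Longrightarrow> deg_le t q \<Longrightarrow> deg_le t (p + q)"
  using pm.subspace_add[OF deg_le_subspace] by blast
lemma deg_le_diff: "deg_le t p \<Longrightarrow> deg_le t q \<Longrightarrow> deg_le t (p - q)"
  using pm.subspace_diff[OF deg_le_subspace] by blast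
lemma deg_le_scale: "deg_le t p \<Longrightarrow> deg_le t (cpoly c * p)"
  using pm.subspace_scale[OF deg_le_subspace] by blast
lemma deg_le_mono: "deg_le t p \<Longrightarrow> t \<le> t' \<Longrightarrow> deg_le t' p"
  by (auto simp: deg_le_def)
lemma deg_le_monom: "deg_le t (monom a) \<longleftrightarrow> mdeg a \<le> t"
  by (simp add: deg_le_def monom_def)
lemma monom_mult: "monom a * monom b = monom (a + b)"
  by (simp add: monom_def mult_single)
lemma monom_0: "monom 0 = 1" by (simp add: monom_def)

definition lower :: "('v mon \<Rightarrow> 'v mon \<Rightarrow> bool) \<Rightarrow> 'v mon \<Rightarrow> 'v mpoly \<Rightarrow> bool" where
  "lower le be p \<longleftrightarrow> (\<forall>a\<in>Poly_Mapping.keys p. le a be)"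
definition slower :: "('v mon \<Rightarrow> 'v mon \<Rightarrow> bool) \<Rightarrow> 'v mon \<Rightarrow> 'v mpoly \<Rightarrow> bool" where
  "slower le be p \<longleftrightarrow> (\<forall>a\<in>Poly_Mapping.keys p. le a be \<and> a \<noteq> be)"

lemma lower_subspace: "pm.subspace {p. lower le be p}"
  by (rule pm.subspaceI) (auto simp: lower_def dest: keys_add[THEN subsetD] keys_cpoly_mult[THEN subsetD])
lemma slower_subspace: "pm.subspace {p. slower le be p}"
  by (rule pm.subspaceI) (auto simp: slower_def dest: keys_add[THEN subsetD] keys_cpoly_mult[THEN subsetD])

lemma lower_monom: "le a be \<Longrightarrow> lower le be (monom a)"
  by (simp add: lower_def monom_def)

lemma mo_refl: "monomial_order le \<Longrightarrow> le a a" unfolding monomial_order_def by blast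
lemma mo_antisym: "monomial_order le \<Longrightarrow> le a b \<Longrightarrow> le b a \<Longrightarrow> a = b" unfolding monomial_order_def by blast
lemma mo_trans: "monomial_order le \<Longrightarrow> le a b \<Longrightarrow> le b c \<Longrightarrow> le a c" unfolding monomial_order_def by blast
lemma mo_total: "monomial_order le \<Longrightarrow> le a b \<or> le b a" unfolding monomial_order_def by blast
lemma mo_add: assumes "monomial_order le" "le a b" shows "le (c + a) (c + b)"
proof -
  have "le (a + c) (b + c)" using assms unfolding monomial_order_def by blast
  then show ?thesis by (simp add: add.commute)
qed

lemma dc_deg:
  assumes "monomial_order le" "degree_compatible le" "le a b"
  shows "mdeg a \<le> mdeg b"
proof (rule ccontr)
  assume "\<not> mdeg a \<le> mdeg b"
  then have "le b a" "b \<noteq> a" using assms(2) unfolding degree_compatible_def by auto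
  then show False using mo_antisym[OF assms(1) assms(3)] by blast
qed

lemma lower_shift:
  assumes "monomial_order le" "lower le be p"
  shows "lower le (de + be) (monom de * p)"
  using keys_mult[of "monom de" p] assms unfolding lower_def
  by (auto simp: monom_def intro: mo_add)

lemma slower_shift:
  assumes "monomial_order le" "slower le be p"
  shows "slower le (de + be) (monom de * p)"
  unfolding slower_def
proof
  fix x assume "x \<in> Poly_Mapping.keys (monom de * p)"
  then obtain y where y: "y \<in> Poly_Mapping.keys p" "x = de + y"
    using keys_mult[of "monom de" p] by (auto simp: monom_def)
  then have "le y be" "y \<noteq> be" using assms(2) by (auto simp: slower_def)
  then show "le x (de + be) \<and> x \<noteq> de + be"
    using y mo_add[OF assms(1)] by auto
qed

lemma lower_deg:
  assumes "monomial_order le" "degree_compatible le" "lower le be p"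
  shows "deg_le (mdeg be) p"
  using assms(3) dc_deg[OF assms(1,2)] unfolding lower_def deg_le_def by auto

lemma span_slower:
  assumes mo: "monomial_order le"
    and S: "\<And>q. q \<in> S \<Longrightarrow> \<exists>be. lower le be q \<and> le be g \<and> be \<noteq> g"
    and p: "p \<in> pm.span S"
  shows "slower le g p"
proof -
  have "S \<subseteq> {p. slower le g p}"
  proof
    fix q assume "q \<in> S"
    then obtain be where "lower le be q" "le be g" "be \<noteq> g" using S by blast
    then show "q \<in> {p. slower le g p}"
      unfolding lower_def slower_def using mo_trans[OF mo] mo_antisym[OF mo] by blast
  qed
  then show ?thesis using pm.span_minimal[OF _ slower_subspace] p by blast
qed


lemma deg_le_mult: "deg_le t p \<Longrightarrow> deg_le t' q \<Longrightarrow> deg_le (t + t') (p * (q :: 'v::finite mpoly))"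
  unfolding deg_le_def using keys_mult[of p q] by (force simp: mdeg_add)

lemma poly_expansion: "p = (\<Sum>a\<in>Poly_Mapping.keys p. cpoly (Poly_Mapping.lookup p a) * monom a)"
proof (rule poly_mapping_eqI)
  fix k
  have "Poly_Mapping.lookup (\<Sum>a\<in>Poly_Mapping.keys p. cpoly (Poly_Mapping.lookup p a) * monom a) k
      = (\<Sum>a\<in>Poly_Mapping.keys p. (if a = k then Poly_Mapping.lookup p a else 0))"
    by (simp add: lookup_sum lookup_cpoly_mult monom_def lookup_single when_def if_distrib cong: if_cong)
  also have "\<dots> = Poly_Mapping.lookup p k"
    by (simp add: sum.delta in_keys_iff)
  finally show "Poly_Mapping.lookup p k = Poly_Mapping.lookup (\<Sum>a\<in>Poly_Mapping.keys p. cpoly (Poly_Mapping.lookup p a) * monom a) k" ..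
qed

lemma monom_mult_expansion:
  "monom d * p = (\<Sum>a\<in>Poly_Mapping.keys p. cpoly (Poly_Mapping.lookup p a) * monom (d + a))"
  apply (subst poly_expansion[of p])
  apply (simp only: sum_distrib_left)
  apply (rule sum.cong, rule refl)
  apply (subst mult.left_commute)
  apply (simp only: monom_mult)
  done




lemma ip_right_add: "ip s r (p + q) = ip s r p + ip s r q" by (metis ip_sym ip_add)

lemma cs:
  assumes pos: "positive_functional d s" and p: "deg_le (d+1) p" and q: "deg_le (d+1) q"
    and pp: "sigma s (p * p) = 0"
  shows "sigma s (p * q) = 0"
proof -
  define x where "x = ip s p q"
  define Q where "Q = ip s q q"
  have Q0: "Q \<ge> 0" using pos q unfolding Q_def ip_def positive_functional_def by blast
  define u where "u = x / (Q + 1)"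
  have xu: "x = u * (Q + 1)" using Q0 unfolding u_def by simp
  define r where "r = p + cpoly (- u) * q"
  have "deg_le (d+1) r" unfolding r_def by (intro deg_le_add deg_le_scale p q)
  then have r0: "ip s r r \<ge> 0" using pos unfolding ip_def positive_functional_def by blast
  have "ip s r r = ip s p p + 2 * (- u) * x + (- u) * (- u) * Q"
    unfolding r_def x_def Q_def
    apply (simp only: ip_add ip_right_add ip_scale ip_sym_scale)
    apply (simp add: ip_sym[of s q p] algebra_simps)
    done
  also have "ip s p p = 0" using pp by (simp add: ip_def)
  finally have "0 \<le> - 2 * u * x + u * u * Q" using r0 by simp
  then have "0 \<le> - (u * u) * (Q + 2)" unfolding xu by (simp add: algebra_simps)
  moreover have "(u * u) * (Q + 2) \<ge> 0" using Q0 by simp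
  ultimately have "(u * u) * (Q + 2) = 0" by (simp only: mult_minus_left)
  then have "u * u = 0" using Q0 by simp
  then have "u = 0" by simp
  then show ?thesis using xu unfolding x_def ip_def by simp
qed

definition Kset :: "nat \<Rightarrow> ('v mon \<Rightarrow> real) \<Rightarrow> 'v mpoly set" where
  "Kset d s = {p. deg_le d p \<and> (\<forall>q. deg_le (d+1) q \<longrightarrow> sigma s (p * q) = 0)}"

lemma K_intro:
  assumes "positive_functional d s" "deg_le d p" "sigma s (p * p) = 0"
  shows "p \<in> Kset d s"
  using cs[OF assms(1) deg_le_mono[OF assms(2)] _ assms(3)] assms(2) unfolding Kset_def by auto

lemma monom_decomp:
  assumes "mdeg (de :: 'v::finite mon) = Suc n"
  obtains de' v where "de = de' + Poly_Mapping.single v 1" "mdeg de' = n"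
proof -
  have "\<exists>v. Poly_Mapping.lookup de v > 0"
  proof (rule ccontr)
    assume "\<not> ?thesis"
    then have "de = 0" by (intro poly_mapping_eqI) auto
    then show False using assms by simp
  qed
  then obtain v where v: "Poly_Mapping.lookup de v > 0" by blast
  define de' where "de' = de - Poly_Mapping.single v 1"
  have eq: "de = de' + Poly_Mapping.single v 1"
    by (rule poly_mapping_eqI) (use v in \<open>auto simp: de'_def lookup_add lookup_minus lookup_single when_def\<close>)
  have "mdeg (Poly_Mapping.single v (1::nat)) = 1" by (simp add: mdeg_def)
  then have "mdeg de' = n" using assms eq mdeg_add[of de' "Poly_Mapping.single v 1"] by simp
  then show thesis using that eq by blast
qed

lemma K_shift:
  assumes pos: "positive_functional d s" and pK: "p \<in> Kset d s" and pe: "deg_le e p"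
  shows "mdeg (de :: 'v::finite mon) + e \<le> d \<Longrightarrow> monom de * p \<in> Kset d s"
proof (induction "mdeg de" arbitrary: de)
  case 0
  then have "de = 0" using mdeg_eq_0 by metis
  then show ?case using pK by (simp add: monom_0)
next
  case (Suc n)
  from monom_decomp[OF Suc.hyps(2)[symmetric]] obtain de' v
    where dv: "de = de' + Poly_Mapping.single v 1" "mdeg de' = n" .
  let ?x = "monom (Poly_Mapping.single v 1) :: 'v mpoly"
  define r' where "r' = monom de' * p"
  have r'K: "r' \<in> Kset d s" unfolding r'_def using Suc dv by simp
  have dx: "deg_le 1 ?x" by (simp add: deg_le_monom mdeg_def)
  have r'd: "deg_le (n + e) r'" unfolding r'_def using deg_le_mult[OF _ pe, of n "monom de'"] dv
    by (simp add: deg_le_monom)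
  have req: "monom de * p = ?x * r'"
    unfolding r'_def dv monom_mult[symmetric] by (simp only: mult.assoc mult.commute mult.left_commute)
  have "deg_le (1 + (1 + (n + e))) (?x * (?x * r'))"
    by (intro deg_le_mult dx r'd)
  then have d2: "deg_le (d + 1) (?x * (?x * r'))"
    by (rule deg_le_mono) (use Suc.hyps(2) Suc.prems dv in simp)
  have "sigma s ((?x * r') * (?x * r')) = sigma s (r' * (?x * (?x * r')))"
    by (simp only: mult.assoc mult.commute mult.left_commute)
  also have "\<dots> = 0" using r'K d2 unfolding Kset_def by blast
  finally have sq: "sigma s ((?x * r') * (?x * r')) = 0" .
  have "deg_le (1 + (n + e)) (?x * r')" by (intro deg_le_mult dx r'd)
  then have "deg_le d (?x * r')"
    by (rule deg_le_mono) (use Suc.hyps(2) Suc.prems dv in simp)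
  then show ?case unfolding req by (rule K_intro[OF pos _ sq])
qed

lemma deg_le_zero[simp]: "deg_le t 0" by (simp add: deg_le_def)

lemma Ann_subspace: "pm.subspace (Ann s d)"
  by (rule pm.subspaceI)
     (auto simp: Ann_def deg_le_add deg_le_scale distrib_right sigma_add mult.assoc sigma_scale)

lemma K_Ann: "Kset d s \<subseteq> Ann s d"
  unfolding Kset_def Ann_def using deg_le_mono by fastforce




lemma sum_list_distinct: "distinct xs \<Longrightarrow> sum_list (map g xs) = sum g (set xs)"
  by (simp add: sum.distinct_set_conv_list)

lemma proj_orth:
  assumes dist: "distinct P"
    and orth: "\<forall>q\<in>set P. \<forall>q'\<in>set P. q \<noteq> q' \<longrightarrow> ip s q q' = 0"
    and nz: "\<forall>q\<in>set P. ip s q q \<noteq> 0"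
    and q0: "q0 \<in> set P"
  shows "ip s (proj s f P) q0 = 0"
proof -
  define c where "c q = ip s f q / ip s q q" for q
  have "ip s (sum_list (map (\<lambda>q. cpoly (ip s f q / ip s q q) * q) P)) q0
      = (\<Sum>q\<in>set P. c q * ip s q q0)"
    by (simp add: sum_list_distinct[OF dist] ip_sum ip_scale c_def)
  also have "\<dots> = c q0 * ip s q0 q0 + (\<Sum>q\<in>set P - {q0}. c q * ip s q q0)"
    by (rule sum.remove[OF _ q0]) simp
  also have "(\<Sum>q\<in>set P - {q0}. c q * ip s q q0) = 0"
    by (rule sum.neutral) (use orth q0 in auto)
  also have "c q0 * ip s q0 q0 = ip s f q0 \<or> ip s q0 q0 = 0" by (simp add: c_def)
  then have "c q0 * ip s q0 q0 = ip s f q0"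
    using nz q0 by (auto simp: c_def)
  finally show ?thesis unfolding proj_def by (simp add: ip_diff)
qed

lemma proj_minus_span:
  "proj s f P - f \<in> pm.span (set P)"
proof -
  have "\<And>Q. set P \<subseteq> Q \<Longrightarrow> sum_list (map (\<lambda>q. cpoly (ip s f q / ip s q q) * q) P) \<in> pm.span Q"
  proof (induct P)
    case Nil then show ?case by (simp add: pm.span_zero)
  next
    case (Cons a P)
    have "a \<in> pm.span Q" using Cons by (auto intro: pm.span_base)
    then show ?case using Cons by (simp add: pm.span_add pm.span_scale)
  qed
  then have "sum_list (map (\<lambda>q. cpoly (ip s f q / ip s q q) * q) P) \<in> pm.span (set P)" by blast
  then show ?thesis unfolding proj_def using pm.span_neg by fastforce
qed

lemma min_ex:
  assumes mo: "monomial_order le" and "finite S" "S \<noteq> {}"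
  shows "\<exists>m\<in>S. \<forall>y\<in>S. le m y"
  using assms(2,3)
proof (induct S rule: finite_ne_induct)
  case (singleton x) then show ?case using mo_refl[OF mo] by auto
next
  case (insert x F)
  then obtain m where m: "m \<in> F" "\<forall>y\<in>F. le m y" by blast
  show ?case
  proof (cases "le x m")
    case True then show ?thesis using m mo_trans[OF mo] mo_refl[OF mo] by blast
  next
    case False then have "le m x" using mo_total[OF mo] by blast
    then show ?thesis using m by blast
  qed
qed

lemma sort_ex:
  assumes mo: "monomial_order le" and "finite S"
  shows "\<exists>xs. distinct xs \<and> set xs = S \<and> sorted_wrt le xs"
  using assms(2)
proof (induct "card S" arbitrary: S)
  case 0 then show ?case by (intro exI[of _ "[]"]) auto
next
  case (Suc n)
  then have "S \<noteq> {}" by auto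
  then obtain m where m: "m \<in> S" "\<forall>y\<in>S. le m y" using min_ex[OF mo Suc.prems] by blast
  have "card (S - {m}) = n" using Suc m by simp
  then obtain xs where xs: "distinct xs" "set xs = S - {m}" "sorted_wrt le xs"
    using Suc.hyps(1)[of "S - {m}"] Suc.prems by auto
  show ?case
    by (intro exI[of _ "m # xs"]) (use xs m in auto)
qed

lemma sort_uniq:
  assumes mo: "monomial_order le"
  shows "distinct xs \<Longrightarrow> sorted_wrt le xs \<Longrightarrow> distinct ys \<Longrightarrow> sorted_wrt le ys \<Longrightarrow> set xs = set ys \<Longrightarrow> xs = ys"
proof (induct xs arbitrary: ys)
  case Nil then show ?case by simp
next
  case (Cons x xs)
  then obtain y ys' where ys: "ys = y # ys'" by (cases ys) auto
  have "y \<in> set (x # xs)" "x \<in> set ys" using Cons.prems(5) ys by auto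
  then have "le x y" "le y x" using Cons.prems ys by (auto intro: mo_refl[OF mo])
  then have xy: "x = y" using mo_antisym[OF mo] by blast
  have "set xs = set (x # xs) - {x}" "set ys' = set ys - {y}" using Cons.prems(1,3) ys by auto
  then have "set xs = set ys'" using Cons.prems(5) xy by auto
  then show ?case using Cons ys xy by auto
qed

lemma sort_by_props:
  assumes mo: "monomial_order le" and "finite S"
  shows "distinct (sort_by le S) \<and> set (sort_by le S) = S \<and> sorted_wrt le (sort_by le S)"
proof -
  have "\<exists>!xs. distinct xs \<and> set xs = S \<and> sorted_wrt le xs"
    using sort_ex[OF assms] sort_uniq[OF mo] by metis
  then show ?thesis unfolding sort_by_def by (rule theI')
qed

lemma finite_deg: "finite {a :: 'v::finite mon. mdeg a \<le> d}"
proof -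
  have "Poly_Mapping.lookup ` {a :: 'v mon. mdeg a \<le> d} \<subseteq>
        {f. \<forall>x. (x \<in> UNIV \<longrightarrow> f x \<in> {..d}) \<and> (x \<notin> UNIV \<longrightarrow> f x = 0)}"
    using lookup_le_mdeg order_trans by fastforce
  moreover have "finite {f :: 'v \<Rightarrow> nat. \<forall>x. (x \<in> UNIV \<longrightarrow> f x \<in> {..d}) \<and> (x \<notin> UNIV \<longrightarrow> f x = 0)}"
    by (rule finite_set_of_finite_funs) auto
  ultimately have "finite (Poly_Mapping.lookup ` {a :: 'v mon. mdeg a \<le> d})"
    by (rule finite_subset)
  then show ?thesis
    by (rule finite_imageD) (auto intro: inj_onI poly_mapping_eqI)
qed

lemma lowest_ne: "S \<noteq> {} \<Longrightarrow> lowest S \<noteq> {}"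
proof -
  assume "S \<noteq> {}"
  then obtain x where "x \<in> S" by blast
  then obtain y where "y \<in> S" "\<forall>z. z \<in> S \<longrightarrow> mdeg y \<le> mdeg z"
    using ex_has_least_nat[of "\<lambda>z. z \<in> S" x mdeg] by blast
  then show ?thesis unfolding lowest_def by blast
qed

lemma cand_finite: "finite (candidates d b (l :: 'v::finite mon list))"
  unfolding candidates_def by (rule finite_subset[OF _ finite_deg]) auto

lemma next_n_props:
  assumes mo: "monomial_order le"
  shows "distinct (next_n le d (b, ps, l, ks)) \<and> set (next_n le d (b, ps, l, ks)) = lowest (candidates d b (l :: 'v::finite mon list))
     \<and> sorted_wrt le (next_n le d (b, ps, l, ks))"
  unfolding next_n_def using sort_by_props[OF mo, of "lowest (candidates d b l)"]
    cand_finite[of d b l] by (simp add: lowest_def)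




definition PS :: "('v mon \<Rightarrow> 'v mon \<Rightarrow> bool) \<Rightarrow> 'v mon list \<Rightarrow> 'v mpoly list \<Rightarrow> 'v mon \<Rightarrow> 'v mpoly set" where
  "PS le b ps g = {q. \<exists>be. (be, q) \<in> set (zip b ps) \<and> le be g \<and> be \<noteq> g}"

definition Inv :: "('v mon \<Rightarrow> 'v mon \<Rightarrow> bool) \<Rightarrow> ('v mon \<Rightarrow> real) \<Rightarrow> nat \<Rightarrow> 'v mon list \<Rightarrow> 'v mpoly list
    \<Rightarrow> 'v mon list \<Rightarrow> 'v mpoly list \<Rightarrow> bool" where
  "Inv le s d b ps l ks \<longleftrightarrow>
   length b = length ps \<and> length l = length ks \<and> distinct ps \<and>
   (\<forall>q\<in>set ps. \<forall>q'\<in>set ps. q \<noteq> q' \<longrightarrow> ip s q q' = 0) \<and>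
   (\<forall>q\<in>set ps. ip s q q \<noteq> 0) \<and>
   (\<forall>be q. (be, q) \<in> set (zip b ps) \<longrightarrow> lower le be q \<and> q - monom be \<in> pm.span (PS le b ps be) \<and> mdeg be \<le> d) \<and>
   (\<forall>g k. (g, k) \<in> set (zip l ks) \<longrightarrow> lower le g k \<and> k - monom g \<in> pm.span (PS le b ps g) \<and> ip s k k = 0 \<and> mdeg g \<le> d)"

lemma in_set_zip2: "length xs = length ys \<Longrightarrow> y \<in> set ys \<Longrightarrow> \<exists>x. (x, y) \<in> set (zip xs ys)"
  by (metis in_set_conv_nth in_set_zip fst_conv snd_conv)

lemma in_set_zip1: "length xs = length ys \<Longrightarrow> x \<in> set xs \<Longrightarrow> \<exists>y. (x, y) \<in> set (zip xs ys)"
  by (metis in_set_conv_nth in_set_zip fst_conv snd_conv)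

lemma span_lower:
  assumes mo: "monomial_order le"
    and S: "\<And>q. q \<in> S \<Longrightarrow> \<exists>be. lower le be q \<and> le be g"
    and p: "p \<in> pm.span S"
  shows "lower le g p"
proof -
  have "S \<subseteq> {p. lower le g p}"
  proof
    fix q assume "q \<in> S"
    then obtain be where "lower le be q" "le be g" using S by blast
    then show "q \<in> {p. lower le g p}"
      unfolding lower_def using mo_trans[OF mo] by blast
  qed
  then show ?thesis using pm.span_minimal[OF _ lower_subspace] p by blast
qed

lemma PS_mono:
  assumes "length b = length ps"
  shows "PS le b ps g \<subseteq> PS le (b @ [a]) (ps @ [pa]) g"
  unfolding PS_def using assms by (auto simp: zip_append)

lemma proc_step:
  assumes mo: "monomial_order le" and inv: "Inv le s d b ps l ks"
    and ba: "\<forall>be\<in>set b. le be a \<and> be \<noteq> a" and ad: "mdeg a \<le> d"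
  shows "case proc_mon s a (b, ps, l, ks) of (b', ps', l', ks') \<Rightarrow>
     Inv le s d b' ps' l' ks' \<and> set b \<subseteq> set b' \<and> set l \<subseteq> set l' \<and>
     set b' \<union> set l' = insert a (set b \<union> set l) \<and> set b' \<subseteq> insert a (set b)"
proof -
  define pa where "pa = proj s (monom a) ps"
  have len: "length b = length ps" "length l = length ks" using inv unfolding Inv_def by auto
  have dist: "distinct ps" and orth: "\<forall>q\<in>set ps. \<forall>q'\<in>set ps. q \<noteq> q' \<longrightarrow> ip s q q' = 0"
    and nz: "\<forall>q\<in>set ps. ip s q q \<noteq> 0" using inv unfolding Inv_def by auto
  have bp: "\<And>be q. (be, q) \<in> set (zip b ps) \<Longrightarrow> lower le be q \<and> q - monom be \<in> pm.span (PS le b ps be) \<and> mdeg be \<le> d"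
    using inv unfolding Inv_def by blast
  have lk: "\<And>g k. (g, k) \<in> set (zip l ks) \<Longrightarrow> lower le g k \<and> k - monom g \<in> pm.span (PS le b ps g) \<and> ip s k k = 0 \<and> mdeg g \<le> d"
    using inv unfolding Inv_def by blast
  have ps_PS: "set ps \<subseteq> PS le b ps a"
  proof
    fix q assume "q \<in> set ps"
    then obtain be where "(be, q) \<in> set (zip b ps)" using in_set_zip2[OF len(1)] by blast
    moreover then have "be \<in> set b" by (rule set_zip_leftD)
    ultimately show "q \<in> PS le b ps a" using ba unfolding PS_def by blast
  qed
  have pa_span: "pa - monom a \<in> pm.span (PS le b ps a)"
    using proj_minus_span[of s "monom a" ps] pm.span_mono[OF ps_PS] unfolding pa_def by blast
  have pa_orth: "\<forall>q0\<in>set ps. ip s pa q0 = 0"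
    using proj_orth[OF dist orth nz] unfolding pa_def by blast
  have "lower le a (pa - monom a)"
  proof (rule span_lower[OF mo _ pa_span])
    fix q assume "q \<in> PS le b ps a"
    then obtain be where "(be, q) \<in> set (zip b ps)" "le be a" unfolding PS_def by blast
    then show "\<exists>be. lower le be q \<and> le be a" using bp by blast
  qed
  moreover have "lower le a (monom a)" by (rule lower_monom[OF mo_refl[OF mo]])
  ultimately have "lower le a ((pa - monom a) + monom a)"
    using pm.subspace_add[OF lower_subspace[of le a]] by blast
  then have pa_lower: "lower le a pa" by simp
  have PSm: "\<And>g. PS le b ps g \<subseteq> PS le (b @ [a]) (ps @ [pa]) g" by (rule PS_mono[OF len(1)])
  show ?thesis
  proof (cases "ip s pa pa \<noteq> 0")
    case True
    then have eq: "proc_mon s a (b, ps, l, ks) = (b @ [a], ps @ [pa], l, ks)"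
      unfolding proc_mon_def pa_def by (simp add: Let_def)
    have "pa \<notin> set ps" using pa_orth True by blast
    have z: "set (zip (b @ [a]) (ps @ [pa])) = insert (a, pa) (set (zip b ps))"
      using len by (simp add: zip_append)
    have o1: "\<forall>q\<in>set (ps @ [pa]). \<forall>q'\<in>set (ps @ [pa]). q \<noteq> q' \<longrightarrow> ip s q q' = 0"
    proof (intro ballI impI)
      fix q q' assume "q \<in> set (ps @ [pa])" "q' \<in> set (ps @ [pa])" "q \<noteq> q'"
      then consider "q \<in> set ps" "q' \<in> set ps" | "q = pa" "q' \<in> set ps" | "q \<in> set ps" "q' = pa"
        by auto
      then show "ip s q q' = 0"
        by cases (use orth pa_orth \<open>q \<noteq> q'\<close> ip_sym[of s q pa] in auto)
    qed
    have o2: "\<forall>q\<in>set (ps @ [pa]). ip s q q \<noteq> 0" using nz True by auto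
    have o3: "\<forall>be q. (be, q) \<in> set (zip (b @ [a]) (ps @ [pa])) \<longrightarrow> lower le be q \<and>
        q - monom be \<in> pm.span (PS le (b @ [a]) (ps @ [pa]) be) \<and> mdeg be \<le> d"
    proof (intro allI impI)
      fix be q assume "(be, q) \<in> set (zip (b @ [a]) (ps @ [pa]))"
      then consider "be = a" "q = pa" | "(be, q) \<in> set (zip b ps)" unfolding z by auto
      then show "lower le be q \<and> q - monom be \<in> pm.span (PS le (b @ [a]) (ps @ [pa]) be) \<and> mdeg be \<le> d"
        by cases (use pa_lower pa_span ad bp pm.span_mono[OF PSm] in blast)+
    qed
    have o4: "\<forall>g k. (g, k) \<in> set (zip l ks) \<longrightarrow> lower le g k \<and>
        k - monom g \<in> pm.span (PS le (b @ [a]) (ps @ [pa]) g) \<and> ip s k k = 0 \<and> mdeg g \<le> d"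
      using lk pm.span_mono[OF PSm] by blast
    have "Inv le s d (b @ [a]) (ps @ [pa]) l ks"
      unfolding Inv_def using len dist \<open>pa \<notin> set ps\<close> o1 o2 o3 o4 by simp
    then show ?thesis unfolding eq by auto
  next
    case False
    then have eq: "proc_mon s a (b, ps, l, ks) = (b, ps, l @ [a], ks @ [pa])"
      unfolding proc_mon_def pa_def by (simp add: Let_def)
    have z: "set (zip (l @ [a]) (ks @ [pa])) = insert (a, pa) (set (zip l ks))"
      using len by (simp add: zip_append)
    have o4: "\<forall>g k. (g, k) \<in> set (zip (l @ [a]) (ks @ [pa])) \<longrightarrow> lower le g k \<and>
        k - monom g \<in> pm.span (PS le b ps g) \<and> ip s k k = 0 \<and> mdeg g \<le> d"
      unfolding z using lk pa_lower pa_span ad False by auto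
    have "Inv le s d b ps (l @ [a]) (ks @ [pa])"
      using inv o4 len unfolding Inv_def by simp
    then show ?thesis unfolding eq by auto
  qed
qed




lemma fold_step:
  assumes mo: "monomial_order le"
  shows "Inv le s d b ps l ks \<Longrightarrow> sorted_wrt le n \<Longrightarrow> distinct n \<Longrightarrow>
    (\<forall>be\<in>set b. \<forall>a\<in>set n. le be a \<and> be \<noteq> a) \<Longrightarrow> (\<forall>a\<in>set n. mdeg a \<le> d) \<Longrightarrow>
    (case fold (proc_mon s) n (b, ps, l, ks) of (b', ps', l', ks') \<Rightarrow>
      Inv le s d b' ps' l' ks' \<and> set b \<subseteq> set b' \<and> set l \<subseteq> set l' \<and>
      set b' \<union> set l' = set n \<union> set b \<union> set l \<and> set b' \<subseteq> set n \<union> set b)"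
proof (induct n arbitrary: b ps l ks)
  case Nil then show ?case by simp
next
  case (Cons a n)
  obtain b1 ps1 l1 ks1 where e1: "proc_mon s a (b, ps, l, ks) = (b1, ps1, l1, ks1)"
    by (cases "proc_mon s a (b, ps, l, ks)") auto
  have st: "Inv le s d b1 ps1 l1 ks1 \<and> set b \<subseteq> set b1 \<and> set l \<subseteq> set l1 \<and>
      set b1 \<union> set l1 = insert a (set b \<union> set l) \<and> set b1 \<subseteq> insert a (set b)"
    using proc_step[OF mo Cons.prems(1), of a] Cons.prems e1 by auto
  have pre: "\<forall>be\<in>set b1. \<forall>a'\<in>set n. le be a' \<and> be \<noteq> a'"
  proof (intro ballI)
    fix be a' assume "be \<in> set b1" "a' \<in> set n"
    then have "be = a \<or> be \<in> set b" using st by auto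
    then show "le be a' \<and> be \<noteq> a'" using Cons.prems(2,3,4) \<open>a' \<in> set n\<close> by auto
  qed
  have IH: "case fold (proc_mon s) n (b1, ps1, l1, ks1) of (b', ps', l', ks') \<Rightarrow>
      Inv le s d b' ps' l' ks' \<and> set b1 \<subseteq> set b' \<and> set l1 \<subseteq> set l' \<and>
      set b' \<union> set l' = set n \<union> set b1 \<union> set l1 \<and> set b' \<subseteq> set n \<union> set b1"
    using Cons.hyps[of b1 ps1 l1 ks1] st pre Cons.prems(2,3,5) by auto
  have "fold (proc_mon s) (a # n) (b, ps, l, ks) = fold (proc_mon s) n (b1, ps1, l1, ks1)"
    using e1 by simp
  then show ?case using IH st
    by (cases "fold (proc_mon s) n (b1, ps1, l1, ks1)") auto
qed

definition OInv :: "('v mon \<Rightarrow> 'v mon \<Rightarrow> bool) \<Rightarrow> ('v mon \<Rightarrow> real) \<Rightarrow> nat \<Rightarrow> 'v state \<Rightarrow> bool" where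
  "OInv le s d st \<longleftrightarrow> (case st of (b, ps, l, ks) \<Rightarrow> Inv le s d b ps l ks \<and>
     (\<forall>be\<in>set b. \<forall>a\<in>candidates d b l. mdeg be < mdeg a))"

lemma mdvd_refl: "mdvd a a" by (simp add: mdvd_def)

lemma next_n_init:
  assumes mo: "monomial_order le"
  shows "next_n le d ([], [], [], []) = [(0 :: 'v::finite mon)]"
proof -
  have "lowest (candidates d [] ([] :: 'v mon list)) = {0}"
  proof (rule set_eqI)
    fix a :: "'v mon"
    show "a \<in> lowest (candidates d [] []) \<longleftrightarrow> a \<in> {0}"
    proof
      assume "a \<in> lowest (candidates d [] [])"
      moreover have "(0 :: 'v mon) \<in> candidates d [] []" by (simp add: candidates_def)
      ultimately have "mdeg a \<le> mdeg (0 :: 'v mon)" unfolding lowest_def by blast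
      then show "a \<in> {0}" using mdeg_eq_0[of a] by simp
    qed (auto simp: lowest_def candidates_def)
  qed
  then have "distinct (next_n le d ([], [], [], [])) \<and> set (next_n le d ([], [], [], [])) = {0 :: 'v mon}
     \<and> sorted_wrt le (next_n le d ([], [], [], []))"
    using next_n_props[OF mo, of d "[]" "[]" "[]" "[]"] by simp
  then show ?thesis using sort_uniq[OF mo, of "next_n le d ([], [], [], [])" "[0]"] by simp
qed

lemma iter_inv:
  fixes le :: "'v::finite mon \<Rightarrow> 'v mon \<Rightarrow> bool"
  assumes mo: "monomial_order le" and dc: "degree_compatible le"
  shows "alg_iter le s d N = (st, n) \<Longrightarrow> OInv le s d st \<and> n = next_n le d st"
proof (induct N arbitrary: st n)
  case 0
  then have st: "st = ([], [], [], [])" "n = [0]" by auto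
  show ?case unfolding st next_n_init[OF mo] by (simp add: OInv_def Inv_def)
next
  case (Suc N)
  obtain st0 n0 where e0: "alg_iter le s d N = (st0, n0)" by fastforce
  obtain b ps l ks where st0: "st0 = (b, ps, l, ks)" by (cases st0) auto
  have IH: "OInv le s d st0 \<and> n0 = next_n le d st0" using Suc.hyps e0 by blast
  show ?case
  proof (cases "n0 = []")
    case True
    then show ?thesis using Suc.prems e0 IH by simp
  next
    case False
    define st' where "st' = fold (proc_mon s) n0 st0"
    have stn: "st = st'" "n = next_n le d st'"
      using Suc.prems e0 False unfolding st'_def by (auto simp: Let_def)
    have np: "distinct n0" "set n0 = lowest (candidates d b l)" "sorted_wrt le n0"
      using next_n_props[OF mo, of d b ps l ks] IH st0 by auto
    have inv0: "Inv le s d b ps l ks" and ord0: "\<forall>be\<in>set b. \<forall>a\<in>candidates d b l. mdeg be < mdeg a"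
      using IH st0 unfolding OInv_def by auto
    have low: "\<And>a. a \<in> set n0 \<Longrightarrow> a \<in> candidates d b l \<and> (\<forall>c\<in>candidates d b l. mdeg a \<le> mdeg c)"
      using np(2) unfolding lowest_def by auto
    have pre1: "\<forall>be\<in>set b. \<forall>a\<in>set n0. le be a \<and> be \<noteq> a"
      using ord0 low dc unfolding degree_compatible_def by blast
    have pre2: "\<forall>a\<in>set n0. mdeg a \<le> d" using low unfolding candidates_def by auto
    obtain b' ps' l' ks' where e': "st' = (b', ps', l', ks')" by (cases st') auto
    have fs: "Inv le s d b' ps' l' ks' \<and> set b \<subseteq> set b' \<and> set l \<subseteq> set l' \<and>
      set b' \<union> set l' = set n0 \<union> set b \<union> set l \<and> set b' \<subseteq> set n0 \<union> set b"
      using fold_step[OF mo inv0 np(3) np(1) pre1 pre2] e' unfolding st'_def st0 by simp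
    have ord: "\<forall>be\<in>set b'. \<forall>a\<in>candidates d b' l'. mdeg be < mdeg a"
    proof (intro ballI)
      fix be a assume be: "be \<in> set b'" and a: "a \<in> candidates d b' l'"
      have ac: "a \<in> candidates d b l" using a fs unfolding candidates_def by auto
      have an: "a \<notin> set n0"
      proof
        assume "a \<in> set n0"
        then have "a \<in> set b' \<or> a \<in> set l'" using fs by blast
        then show False using a mdvd_refl[of a] unfolding candidates_def by blast
      qed
      have "be \<in> set n0 \<or> be \<in> set b" using be fs by blast
      then show "mdeg be < mdeg a"
      proof
        assume "be \<in> set n0"
        then have "be \<in> candidates d b l" "\<forall>c\<in>candidates d b l. mdeg be \<le> mdeg c" using low by auto
        moreover have "mdeg a \<noteq> mdeg be"
        proof
          assume "mdeg a = mdeg be"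
          then have "a \<in> lowest (candidates d b l)"
            using ac \<open>\<forall>c\<in>candidates d b l. mdeg be \<le> mdeg c\<close> unfolding lowest_def by auto
          then show False using an np(2) by blast
        qed
        ultimately show ?thesis using ac by force
      next
        assume "be \<in> set b" then show ?thesis using ord0 ac by blast
      qed
    qed
    show ?thesis using fs ord stn e' unfolding OInv_def by simp
  qed
qed




definition Gen :: "('v mon \<Rightarrow> 'v mon \<Rightarrow> bool) \<Rightarrow> 'v mon \<Rightarrow> 'v mon list \<Rightarrow> 'v mpoly list \<Rightarrow> 'v mpoly set" where
  "Gen le m l ks = {monom de * kg | de g kg. (g, kg) \<in> set (zip l ks) \<and> le (de + g) m}"

definition V :: "('v mon \<Rightarrow> 'v mon \<Rightarrow> bool) \<Rightarrow> 'v mon \<Rightarrow> 'v mon list \<Rightarrow> 'v mpoly list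
    \<Rightarrow> 'v mon list \<Rightarrow> 'v mpoly list \<Rightarrow> 'v mpoly set" where
  "V le m b ps l ks = pm.span (set (p_upto le m b ps) \<union> Gen le m l ks)"

lemma set_p_upto: "set (p_upto le m b ps) = {q. \<exists>be. (be, q) \<in> set (zip b ps) \<and> le be m}"
  unfolding p_upto_def by force

lemma V_mono:
  assumes mo: "monomial_order le" and "le m1 m"
  shows "V le m1 b ps l ks \<subseteq> V le m b ps l ks"
proof -
  have "set (p_upto le m1 b ps) \<subseteq> set (p_upto le m b ps)"
    using assms mo_trans[OF mo] unfolding set_p_upto by blast
  moreover have "Gen le m1 l ks \<subseteq> Gen le m l ks"
  proof
    fix x assume "x \<in> Gen le m1 l ks"
    then obtain de g kg where "x = monom de * kg" "(g, kg) \<in> set (zip l ks)" "le (de + g) m1"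
      unfolding Gen_def by blast
    moreover then have "le (de + g) m" using mo_trans[OF mo] assms(2) by blast
    ultimately show "x \<in> Gen le m l ks" unfolding Gen_def by blast
  qed
  ultimately show ?thesis unfolding V_def by (intro pm.span_mono Un_mono)
qed

lemma final_cover:
  fixes le :: "'v::finite mon \<Rightarrow> 'v mon \<Rightarrow> bool"
  assumes mo: "monomial_order le" and dc: "degree_compatible le"
    and out: "alg_output le s d (b, ps, l, ks)"
  shows "Inv le s d b ps l ks \<and> (\<forall>m. mdeg m \<le> d \<longrightarrow> m \<in> set b \<or> (\<exists>g\<in>set l. mdvd g m))"
proof -
  obtain N where "alg_iter le s d N = ((b, ps, l, ks), [])" using out unfolding alg_output_def by blast
  from iter_inv[OF mo dc this] have o: "OInv le s d (b, ps, l, ks)" and n: "[] = next_n le d (b, ps, l, ks)"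
    by auto
  have "lowest (candidates d b l) = {}" using next_n_props[OF mo, of d b ps l ks] n by simp
  then have "candidates d b l = {}" using lowest_ne by blast
  then show ?thesis using o unfolding OInv_def candidates_def by auto
qed

lemma cover:
  fixes le :: "'v::finite mon \<Rightarrow> 'v mon \<Rightarrow> bool"
  assumes mo: "monomial_order le" and dc: "degree_compatible le"
    and inv: "Inv le s d b ps l ks"
    and cov: "\<forall>m. mdeg m \<le> d \<longrightarrow> m \<in> set b \<or> (\<exists>g\<in>set l. mdvd g m)"
  shows "mdeg m \<le> d \<Longrightarrow> monom m \<in> V le m b ps l ks"
proof (induct m rule: measure_induct_rule[where f = "\<lambda>m. card {m'. mdeg m' \<le> d \<and> le m' m}"])
  case (less m)
  have len: "length b = length ps" "length l = length ks" using inv unfolding Inv_def by auto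
  have bp: "\<And>be q. (be, q) \<in> set (zip b ps) \<Longrightarrow> lower le be q \<and> q - monom be \<in> pm.span (PS le b ps be) \<and> mdeg be \<le> d"
    using inv unfolding Inv_def by blast
  have lk: "\<And>g k. (g, k) \<in> set (zip l ks) \<Longrightarrow> lower le g k \<and> k - monom g \<in> pm.span (PS le b ps g) \<and> ip s k k = 0 \<and> mdeg g \<le> d"
    using inv unfolding Inv_def by blast
  have PSsub: "PS le b ps m \<subseteq> set (p_upto le m b ps)" unfolding PS_def set_p_upto by blast
  have Vsub: "set (p_upto le m b ps) \<subseteq> V le m b ps l ks" "Gen le m l ks \<subseteq> V le m b ps l ks"
    unfolding V_def using pm.span_superset by blast+
  from cov less.prems consider "m \<in> set b" | g where "g \<in> set l" "mdvd g m" by blast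
  then show ?case
  proof cases
    case 1
    then obtain q where q: "(m, q) \<in> set (zip b ps)" using in_set_zip1[OF len(1)] by blast
    have "pm.span (PS le b ps m) \<subseteq> V le m b ps l ks"
      unfolding V_def by (rule pm.span_mono) (use PSsub in blast)
    then have "q - monom m \<in> V le m b ps l ks" using bp[OF q] by blast
    moreover have "q \<in> V le m b ps l ks" using q Vsub(1) mo_refl[OF mo] unfolding set_p_upto by blast
    ultimately have "q - (q - monom m) \<in> V le m b ps l ks" unfolding V_def by (rule pm.span_diff[rotated])
    then show ?thesis by simp
  next
    case 2
    then obtain k where gk: "(g, k) \<in> set (zip l ks)" using in_set_zip1[OF len(2)] by blast
    define de where "de = m - g"
    have mde: "m = de + g"
      by (rule poly_mapping_eqI) (use 2(2) in \<open>auto simp: de_def lookup_add lookup_minus mdvd_def\<close>)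
    define r where "r = k - monom g"
    have rspan: "r \<in> pm.span (PS le b ps g)" using lk[OF gk] unfolding r_def by blast
    have rsl: "slower le g r"
    proof (rule span_slower[OF mo _ rspan])
      fix q assume "q \<in> PS le b ps g"
      then obtain be where "(be, q) \<in> set (zip b ps)" "le be g" "be \<noteq> g" unfolding PS_def by blast
      then show "\<exists>be. lower le be q \<and> le be g \<and> be \<noteq> g" using bp by blast
    qed
    have "monom (de + a) \<in> V le m b ps l ks" if a: "a \<in> Poly_Mapping.keys r" for a
    proof -
      have "le a g" "a \<noteq> g" using rsl a unfolding slower_def by auto
      then have lt: "le (de + a) m" "de + a \<noteq> m" using mo_add[OF mo] unfolding mde by auto
      have dg: "mdeg (de + a) \<le> d" using dc_deg[OF mo dc lt(1)] less.prems by simp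
      have "{m'. mdeg m' \<le> d \<and> le m' (de + a)} \<subset> {m'. mdeg m' \<le> d \<and> le m' m}"
      proof
        show "{m'. mdeg m' \<le> d \<and> le m' (de + a)} \<subseteq> {m'. mdeg m' \<le> d \<and> le m' m}"
          using lt mo_trans[OF mo] by blast
        have "m \<notin> {m'. mdeg m' \<le> d \<and> le m' (de + a)}" using lt mo_antisym[OF mo] by blast
        moreover have "m \<in> {m'. mdeg m' \<le> d \<and> le m' m}" using less.prems mo_refl[OF mo] by blast
        ultimately show "{m'. mdeg m' \<le> d \<and> le m' (de + a)} \<noteq> {m'. mdeg m' \<le> d \<and> le m' m}" by blast
      qed
      then have "card {m'. mdeg m' \<le> d \<and> le m' (de + a)} < card {m'. mdeg m' \<le> d \<and> le m' m}"
      proof (rule psubset_card_mono[rotated])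
        show "finite {m'. mdeg m' \<le> d \<and> le m' m}" by (rule finite_subset[OF _ finite_deg[of d]]) auto
      qed
      then have "monom (de + a) \<in> V le (de + a) b ps l ks" using less.hyps dg by blast
      then show ?thesis using V_mono[OF mo lt(1)] by blast
    qed
    then have "monom de * r \<in> V le m b ps l ks"
      unfolding monom_mult_expansion[of de r] V_def by (intro pm.span_sum pm.span_scale) auto
    moreover have "monom de * k \<in> V le m b ps l ks"
      using Vsub(2) gk mo_refl[OF mo] unfolding Gen_def mde by blast
    ultimately have "monom de * k - monom de * r \<in> V le m b ps l ks"
      unfolding V_def by (rule pm.span_diff[rotated])
    moreover have "monom de * k - monom de * r = monom m"
      unfolding r_def mde monom_mult[symmetric] by (simp add: algebra_simps)
    ultimately show ?thesis by simp
  qed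
qed




theorem proposition4p1:
  fixes le :: "('v::finite) mon \<Rightarrow> 'v mon \<Rightarrow> bool"
    and s :: "'v mon \<Rightarrow> real" and d :: nat
    and b :: "'v mon list" and ps :: "'v mpoly list"
    and l :: "'v mon list" and ks :: "'v mpoly list" and a :: "'v mon"
  assumes "monomial_order le" and "degree_compatible le"
    and "positive_functional d s"
    and "alg_output le s d (b, ps, l, ks)"
    and "mdeg a \<le> d" and "\<exists>g\<in>set l. mdvd g a"
  shows "proj s (monom a) (p_upto le a b ps) \<in> k_upto le a l ks
         \<and> k_upto le a l ks \<subseteq> Ann s d"
proof -
  note mo = assms(1) and dc = assms(2) and pos = assms(3) and ad = assms(5)
  have fc: "Inv le s d b ps l ks" "\<forall>m. mdeg m \<le> d \<longrightarrow> m \<in> set b \<or> (\<exists>g\<in>set l. mdvd g m)"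
    using final_cover[OF mo dc assms(4)] by auto
  note inv = fc(1)
  have len: "length b = length ps" "length l = length ks" using inv unfolding Inv_def by auto
  have dist: "distinct ps" and orth: "\<forall>q\<in>set ps. \<forall>q'\<in>set ps. q \<noteq> q' \<longrightarrow> ip s q q' = 0"
    and nz: "\<forall>q\<in>set ps. ip s q q \<noteq> 0" using inv unfolding Inv_def by auto
  have bp: "\<And>be q. (be, q) \<in> set (zip b ps) \<Longrightarrow> lower le be q \<and> q - monom be \<in> pm.span (PS le b ps be) \<and> mdeg be \<le> d"
    using inv unfolding Inv_def by blast
  have lk: "\<And>g k. (g, k) \<in> set (zip l ks) \<Longrightarrow> lower le g k \<and> k - monom g \<in> pm.span (PS le b ps g) \<and> ip s k k = 0 \<and> mdeg g \<le> d"
    using inv unfolding Inv_def by blast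
  define P where "P = p_upto le a b ps"
  define G where "G = Gen le a l ks"
  have kspan: "k_upto le a l ks = pm.span G" unfolding k_upto_def G_def Gen_def lin_span_eq ..
  have GAnn: "G \<subseteq> Ann s d"
  proof
    fix x assume "x \<in> G"
    then obtain de g kg where x: "x = monom de * kg" and gk: "(g, kg) \<in> set (zip l ks)"
      and lea: "le (de + g) a" unfolding G_def Gen_def by blast
    have kg: "lower le g kg" "ip s kg kg = 0" "mdeg g \<le> d" using lk[OF gk] by auto
    have dkg: "deg_le (mdeg g) kg" by (rule lower_deg[OF mo dc kg(1)])
    have "kg \<in> Kset d s"
      by (rule K_intro[OF pos deg_le_mono[OF dkg kg(3)]]) (use kg(2) in \<open>simp add: ip_def\<close>)
    moreover have "mdeg de + mdeg g \<le> d" using dc_deg[OF mo dc lea] ad mdeg_add[of de g] by simp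
    ultimately have "x \<in> Kset d s" unfolding x by (intro K_shift[OF pos _ dkg])
    then show "x \<in> Ann s d" using K_Ann by blast
  qed
  have part2: "k_upto le a l ks \<subseteq> Ann s d"
    unfolding kspan by (rule pm.span_minimal[OF GAnn Ann_subspace])
  have setP: "set P \<subseteq> set ps" unfolding P_def set_p_upto by (auto dest: set_zip_rightD)
  have distP: "distinct P"
    unfolding P_def p_upto_def by (rule distinct_map_filter) (use dist len in simp)
  have orthP: "\<forall>q\<in>set P. \<forall>q'\<in>set P. q \<noteq> q' \<longrightarrow> ip s q q' = 0" using orth setP by blast
  have nzP: "\<forall>q\<in>set P. ip s q q \<noteq> 0" using nz setP by blast
  have degP: "deg_le d q" if qP: "q \<in> set P" for q
  proof -
    obtain be where "(be, q) \<in> set (zip b ps)" using qP unfolding P_def set_p_upto by blast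
    then have "lower le be q" "mdeg be \<le> d" using bp by auto
    then show ?thesis using lower_deg[OF mo dc] deg_le_mono by blast
  qed
  define pr where "pr = proj s (monom a) P"
  have "monom a \<in> V le a b ps l ks" using cover[OF mo dc inv fc(2) ad] .
  moreover have "pr - monom a \<in> V le a b ps l ks"
    using proj_minus_span[of s "monom a" P] pm.span_mono[of "set P" "set P \<union> G"]
    unfolding pr_def V_def P_def G_def by blast
  ultimately have "(pr - monom a) + monom a \<in> V le a b ps l ks"
    unfolding V_def by (rule pm.span_add[rotated])
  then have "pr \<in> pm.span (set P \<union> G)" unfolding V_def P_def G_def by simp
  then obtain u w where uw: "pr = u + w" "u \<in> pm.span (set P)" "w \<in> pm.span G"
    unfolding pm.span_Un by blast
  have wAnn: "w \<in> Ann s d" using uw(3) part2 kspan by blast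
  have uorth: "ip s u q0 = 0" if q0: "q0 \<in> set P" for q0
  proof -
    have "ip s pr q0 = 0" unfolding pr_def by (rule proj_orth[OF distP orthP nzP q0])
    moreover have "ip s w q0 = 0" using wAnn degP[OF q0] unfolding Ann_def ip_def by blast
    ultimately show ?thesis using uw(1) by (simp add: ip_add)
  qed
  obtain t r where tr: "finite t" "t \<subseteq> set P" "u = (\<Sum>x\<in>t. cpoly (r x) * x)"
    using uw(2) unfolding pm.span_explicit by blast
  have "r x0 = 0" if x0: "x0 \<in> t" for x0
  proof -
    have "0 = ip s u x0" using uorth x0 tr(2) by auto
    also have "\<dots> = (\<Sum>x\<in>t. r x * ip s x x0)" unfolding tr(3) by (simp add: ip_sum ip_scale)
    also have "\<dots> = r x0 * ip s x0 x0 + (\<Sum>x\<in>t - {x0}. r x * ip s x x0)"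
      by (rule sum.remove[OF tr(1) x0])
    also have "(\<Sum>x\<in>t - {x0}. r x * ip s x x0) = 0"
      by (rule sum.neutral) (use orthP tr(2) x0 in auto)
    finally show "r x0 = 0" using nzP tr(2) x0 by auto
  qed
  then have "u = 0" unfolding tr(3) by simp
  then have "pr \<in> k_upto le a l ks" using uw kspan by simp
  then show ?thesis using part2 unfolding pr_def P_def by blast
qed


end
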